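(* Let $I\subset S=K[x_1,\dots,x_t]$ be a nonzero proper monomial ideal and let $f\in I$ be a homogeneous element with $\deg f=\alpha(I)$ such that $v(I^{n+1}:f^n)=\alpha(I)-1$ for all sufficiently large $n$. Then $v(I^{n+1})=(n+1)\alpha(I)-1$ for all sufficiently large $n$.
   Context: $K$ is a field and $S$ is standard graded. For a proper graded ideal $J$, the $v$-number is $v(J)=\min\{k\ge 0 : \exists g\in S_k,\ \mathcal P\in\operatorname{Ass}(S/J) \text{ with } (J:g)=\mathcal P\}$. $\alpha(I)=\min\{\deg g : g\in I\setminus\{0\} \text{ homogeneous}\}$. *)

theory Defs
  imports "HOL-Library.Poly_Mapping"
begin

text \<open>Polynomial ring S = K[x_v : v in 'v] for a finite type of variables 'v,
  realised as finitely supported maps from monomials (exponent vectors) to coefficients.\<close>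

type_synonym ('v, 'a) mpoly = "('v \<Rightarrow>\<^sub>0 nat) \<Rightarrow>\<^sub>0 'a"

definition mon_deg :: "('v \<Rightarrow>\<^sub>0 nat) \<Rightarrow> nat" where
  "mon_deg m = (\<Sum>i\<in>Poly_Mapping.keys m. Poly_Mapping.lookup m i)"

definition monomial_poly :: "('v \<Rightarrow>\<^sub>0 nat) \<Rightarrow> ('v, 'a::field) mpoly" where
  "monomial_poly m = Poly_Mapping.single m 1"

text \<open>g is an element of S_k (homogeneous of degree k; 0 belongs to every S_k).\<close>
definition homog :: "nat \<Rightarrow> ('v, 'a::field) mpoly \<Rightarrow> bool" where
  "homog k g \<longleftrightarrow> (\<forall>m\<in>Poly_Mapping.keys g. mon_deg m = k)"

definition is_ideal :: "('v, 'a::field) mpoly set \<Rightarrow> bool" where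
  "is_ideal I \<longleftrightarrow> 0 \<in> I \<and> (\<forall>a\<in>I. \<forall>b\<in>I. a + b \<in> I) \<and> (\<forall>r. \<forall>a\<in>I. r * a \<in> I)"

definition ideal_gen :: "('v, 'a::field) mpoly set \<Rightarrow> ('v, 'a) mpoly set" where
  "ideal_gen G = \<Inter>{I. is_ideal I \<and> G \<subseteq> I}"

definition prime_ideal :: "('v, 'a::field) mpoly set \<Rightarrow> bool" where
  "prime_ideal P \<longleftrightarrow> is_ideal P \<and> P \<noteq> UNIV \<and> (\<forall>a b. a * b \<in> P \<longrightarrow> a \<in> P \<or> b \<in> P)"

definition monomial_ideal :: "('v, 'a::field) mpoly set \<Rightarrow> bool" where
  "monomial_ideal I \<longleftrightarrow> (\<exists>M. I = ideal_gen (monomial_poly ` M))"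

definition colon :: "('v, 'a::field) mpoly set \<Rightarrow> ('v, 'a) mpoly \<Rightarrow> ('v, 'a) mpoly set" where
  "colon J g = {h. h * g \<in> J}"

fun ideal_pow :: "('v, 'a::field) mpoly set \<Rightarrow> nat \<Rightarrow> ('v, 'a) mpoly set" where
  "ideal_pow I 0 = UNIV"
| "ideal_pow I (Suc n) = ideal_gen {a * b | a b. a \<in> ideal_pow I n \<and> b \<in> I}"

definition Ass :: "('v, 'a::field) mpoly set \<Rightarrow> ('v, 'a) mpoly set set" where
  "Ass J = {P. prime_ideal P \<and> (\<exists>g. colon J g = P)}"

definition v_number :: "('v, 'a::field) mpoly set \<Rightarrow> nat" where
  "v_number J = (LEAST k. \<exists>g P. homog k g \<and> P \<in> Ass J \<and> colon J g = P)"

definition alpha :: "('v, 'a::field) mpoly set \<Rightarrow> nat" where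
  "alpha I = (LEAST d. \<exists>g\<in>I. g \<noteq> 0 \<and> homog d g)"

end

theory Submission
  imports Defs
begin

lemma mon_deg_UNIV: "mon_deg (m::'v::finite \<Rightarrow>\<^sub>0 nat) = (\<Sum>i\<in>UNIV. Poly_Mapping.lookup m i)"
  unfolding mon_deg_def by (rule sum.mono_neutral_left) (auto simp: in_keys_iff)

lemma mon_deg_add: "mon_deg (a + b::'v::finite \<Rightarrow>\<^sub>0 nat) = mon_deg a + mon_deg b"
  by (simp add: mon_deg_UNIV lookup_add sum.distrib)

lemma mon_deg_single: "mon_deg (Poly_Mapping.single i (1::nat)) = 1"
  by (simp add: mon_deg_def)

lemma mon_deg_0: "mon_deg 0 = 0"
  by (simp add: mon_deg_def)

lemma mon_deg_eq_0: "mon_deg (m::'v \<Rightarrow>\<^sub>0 nat) = 0 \<Longrightarrow> m = 0"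
  unfolding mon_deg_def by (simp add: in_keys_iff poly_mapping_eqI)

lemma mpoly_mult_ne0:
  fixes p q :: "('v::finite, 'a::field) mpoly"
  assumes p0: "p \<noteq> 0" and q0: "q \<noteq> 0" shows "p * q \<noteq> 0"
proof -
  obtain vs :: "'v list" where vs: "set vs = UNIV" using finite_list[of "UNIV::'v set"] by auto
  define \<psi> :: "('v \<Rightarrow>\<^sub>0 nat) \<Rightarrow> (nat \<Rightarrow>\<^sub>0 nat)" where
    "\<psi> m = Abs_poly_mapping (\<lambda>k. if k < length vs then Poly_Mapping.lookup m (vs!k) else 0)" for m
  have l\<psi>: "Poly_Mapping.lookup (\<psi> m) k = (if k < length vs then Poly_Mapping.lookup m (vs!k) else 0)" for m k
  proof -
    have "finite {k. (if k < length vs then Poly_Mapping.lookup m (vs!k) else 0) \<noteq> 0}"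
      by (rule finite_subset[of _ "{..<length vs}"]) auto
    then show ?thesis unfolding \<psi>_def by simp
  qed
  have \<psi>add: "\<psi> (a + b) = \<psi> a + \<psi> b" for a b
    by (rule poly_mapping_eqI) (simp add: l\<psi> lookup_add)
  have \<psi>inj: "a = b" if "\<psi> a = \<psi> b" for a b
  proof (rule poly_mapping_eqI)
    fix i
    obtain k where k: "k < length vs" "vs ! k = i" using vs by (metis UNIV_I in_set_conv_nth)
    have "Poly_Mapping.lookup (\<psi> a) k = Poly_Mapping.lookup (\<psi> b) k" using that by simp
    then show "Poly_Mapping.lookup a i = Poly_Mapping.lookup b i" using k by (simp add: l\<psi>)
  qed
  have ex_max: "\<exists>a0\<in>Poly_Mapping.keys r. \<forall>a\<in>Poly_Mapping.keys r. \<psi> a \<le> \<psi> a0" if "r \<noteq> 0" for r :: "('v, 'a) mpoly"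
  proof -
    have fin: "finite (\<psi> ` Poly_Mapping.keys r)" and ne: "\<psi> ` Poly_Mapping.keys r \<noteq> {}" using that by auto
    obtain a0 where "a0 \<in> Poly_Mapping.keys r" "\<psi> a0 = Max (\<psi> ` Poly_Mapping.keys r)" using Max_in[OF fin ne] by auto
    moreover have "\<forall>a\<in>Poly_Mapping.keys r. \<psi> a \<le> Max (\<psi> ` Poly_Mapping.keys r)"
      using Max_ge[OF fin] by blast
    ultimately show ?thesis by metis
  qed
  obtain a0 where a0: "a0 \<in> Poly_Mapping.keys p" "\<And>a. a \<in> Poly_Mapping.keys p \<Longrightarrow> \<psi> a \<le> \<psi> a0" using ex_max[OF p0] by auto
  obtain b0 where b0: "b0 \<in> Poly_Mapping.keys q" "\<And>a. a \<in> Poly_Mapping.keys q \<Longrightarrow> \<psi> a \<le> \<psi> b0" using ex_max[OF q0] by auto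
  define s where "s = Poly_Mapping.single a0 (Poly_Mapping.lookup p a0)"
  define t where "t = Poly_Mapping.single b0 (Poly_Mapping.lookup q b0)"
  define p1 where "p1 = p - s"
  define q1 where "q1 = q - t"
  have kp1: "Poly_Mapping.keys p1 \<subseteq> Poly_Mapping.keys p - {a0}"
    by (auto simp: p1_def s_def in_keys_iff lookup_minus lookup_single when_def split: if_splits)
  have kq1: "Poly_Mapping.keys q1 \<subseteq> Poly_Mapping.keys q - {b0}"
    by (auto simp: q1_def t_def in_keys_iff lookup_minus lookup_single when_def split: if_splits)
  have eq: "p * q = s * t + s * q1 + p1 * q"
    by (simp add: p1_def q1_def algebra_simps)
  have l1: "Poly_Mapping.lookup (s * t) (a0 + b0) = Poly_Mapping.lookup p a0 * Poly_Mapping.lookup q b0"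
    by (simp add: s_def t_def mult_single)
  have l2: "Poly_Mapping.lookup (s * q1) (a0 + b0) = 0"
  proof -
    have "a0 + b0 \<notin> Poly_Mapping.keys (s * q1)"
    proof
      assume "a0 + b0 \<in> Poly_Mapping.keys (s * q1)"
      then obtain a b where "a \<in> Poly_Mapping.keys s" "b \<in> Poly_Mapping.keys q1" "a0 + b0 = a + b" using keys_mult by blast
      then show False using kq1 by (auto simp: s_def split: if_splits)
    qed
    then show ?thesis by (simp add: in_keys_iff)
  qed
  have l3: "Poly_Mapping.lookup (p1 * q) (a0 + b0) = 0"
  proof -
    have "a0 + b0 \<notin> Poly_Mapping.keys (p1 * q)"
    proof
      assume "a0 + b0 \<in> Poly_Mapping.keys (p1 * q)"
      then obtain a b where ab: "a \<in> Poly_Mapping.keys p1" "b \<in> Poly_Mapping.keys q" "a0 + b0 = a + b" using keys_mult by blast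
      have "\<psi> a < \<psi> a0" using ab(1) kp1 a0(2) \<psi>inj by (metis DiffD1 DiffD2 insertI1 order_le_less subsetD)
      moreover have "\<psi> b \<le> \<psi> b0" using ab(2) b0(2) by auto
      ultimately have "\<psi> a + \<psi> b < \<psi> a0 + \<psi> b0" by (rule add_less_le_mono)
      then show False using ab(3) \<psi>add by (metis less_irrefl)
    qed
    then show ?thesis by (simp add: in_keys_iff)
  qed
  have "Poly_Mapping.lookup (p * q) (a0 + b0) = Poly_Mapping.lookup p a0 * Poly_Mapping.lookup q b0"
    unfolding eq by (simp add: lookup_add l1 l2 l3)
  also have "\<dots> \<noteq> 0" using a0(1) b0(1) by (simp add: in_keys_iff)
  finally show ?thesis by auto
qed


definition mid :: "('v \<Rightarrow>\<^sub>0 nat) set \<Rightarrow> ('v, 'a::field) mpoly set" where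
  "mid E = {p. Poly_Mapping.keys p \<subseteq> E}"

definition upc :: "('v \<Rightarrow>\<^sub>0 nat) set \<Rightarrow> bool" where
  "upc E \<longleftrightarrow> (\<forall>a c. a \<in> E \<longrightarrow> a + c \<in> E)"

definition restr :: "(('v \<Rightarrow>\<^sub>0 nat) \<Rightarrow> bool) \<Rightarrow> ('v, 'a::field) mpoly \<Rightarrow> ('v, 'a) mpoly" where
  "restr P p = Abs_poly_mapping (\<lambda>k. if P k then Poly_Mapping.lookup p k else 0)"

lemma lookup_restr: "Poly_Mapping.lookup (restr P p) k = (if P k then Poly_Mapping.lookup p k else 0)"
proof -
  have "finite {k. (if P k then Poly_Mapping.lookup p k else 0) \<noteq> 0}"
    by (rule finite_subset[of _ "Poly_Mapping.keys p"]) (simp_all add: subset_iff in_keys_iff)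
  then show ?thesis unfolding restr_def by simp
qed

lemma keys_restr: "Poly_Mapping.keys (restr P p) = {k \<in> Poly_Mapping.keys p. P k}"
  by (auto simp: in_keys_iff lookup_restr split: if_split_asm)

lemma restr_split: "p = restr P p + restr (\<lambda>k. \<not> P k) p"
  by (rule poly_mapping_eqI) (simp add: lookup_add lookup_restr)

lemma ideal_gen_ideal: "is_ideal (ideal_gen G)"
  unfolding is_ideal_def ideal_gen_def by auto

lemma ideal_gen_sub: "G \<subseteq> ideal_gen G"
  unfolding ideal_gen_def by auto

lemma ideal_gen_min: "is_ideal J \<Longrightarrow> G \<subseteq> J \<Longrightarrow> ideal_gen G \<subseteq> J"
  unfolding ideal_gen_def by auto

lemma ideal_0: "is_ideal I \<Longrightarrow> 0 \<in> I" unfolding is_ideal_def by auto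
lemma ideal_add: "is_ideal I \<Longrightarrow> a \<in> I \<Longrightarrow> b \<in> I \<Longrightarrow> a + b \<in> I" unfolding is_ideal_def by blast
lemma ideal_multl: "is_ideal I \<Longrightarrow> a \<in> I \<Longrightarrow> r * a \<in> I" unfolding is_ideal_def by blast
lemma ideal_multr: "is_ideal I \<Longrightarrow> a \<in> I \<Longrightarrow> a * r \<in> I" using ideal_multl[of I a r] by (simp add: mult.commute)
lemma ideal_diff: "is_ideal I \<Longrightarrow> a \<in> I \<Longrightarrow> b \<in> I \<Longrightarrow> a - b \<in> I"
proof -
  assume I: "is_ideal I" and a: "a \<in> I" and b: "b \<in> I"
  have "(-1) * b \<in> I" using ideal_multl[OF I b] .
  then have "a + (-1) * b \<in> I" using ideal_add[OF I a] by blast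
  then show ?thesis by simp
qed

lemma ideal_sum: "is_ideal I \<Longrightarrow> (\<And>x. x \<in> A \<Longrightarrow> f x \<in> I) \<Longrightarrow> sum f A \<in> I"
  by (induction A rule: infinite_finite_induct) (auto intro: ideal_0 ideal_add)

lemma ideal_mid: "upc E \<Longrightarrow> is_ideal (mid E :: ('v, 'a::field) mpoly set)"
proof -
  assume u: "upc E"
  have A: "a + b \<in> mid E" if "a \<in> mid E" "b \<in> mid E" for a b :: "('v,'a) mpoly"
    using that keys_add[of a b] unfolding mid_def by blast
  have B: "r * a \<in> mid E" if "a \<in> mid E" for r a :: "('v,'a) mpoly"
  proof -
    have "x \<in> E" if "x \<in> Poly_Mapping.keys (r * a)" for x
    proof -
      obtain y z where "x = y + z" "y \<in> Poly_Mapping.keys r" "z \<in> Poly_Mapping.keys a"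
        using keys_mult[of r a] \<open>x \<in> Poly_Mapping.keys (r * a)\<close> by blast
      moreover have "z \<in> E" using \<open>a \<in> mid E\<close> calculation(3) unfolding mid_def by blast
      ultimately show ?thesis using u unfolding upc_def by (metis add.commute)
    qed
    then show ?thesis unfolding mid_def by blast
  qed
  show ?thesis unfolding is_ideal_def using A B by (auto simp: mid_def)
qed

lemma poly_decomp: "p = (\<Sum>k\<in>Poly_Mapping.keys p. Poly_Mapping.single k (Poly_Mapping.lookup p k))"
proof (rule poly_mapping_eqI)
  fix x
  show "Poly_Mapping.lookup p x = Poly_Mapping.lookup (\<Sum>k\<in>Poly_Mapping.keys p. Poly_Mapping.single k (Poly_Mapping.lookup p k)) x"
    by (auto simp: lookup_sum lookup_single when_def in_keys_iff)
qed

lemma single_mul: "Poly_Mapping.single k c = Poly_Mapping.single 0 c * (Poly_Mapping.single k (1::'a::field) :: ('v, 'a) mpoly)"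
  by (simp add: mult_single)

lemma gen_mid:
  fixes G :: "('v, 'a::field) mpoly set"
  assumes "upc E" "G \<subseteq> mid E" "\<And>k. k \<in> E \<Longrightarrow> Poly_Mapping.single k 1 \<in> ideal_gen G"
  shows "ideal_gen G = mid E"
proof
  show "ideal_gen G \<subseteq> mid E" using ideal_gen_min[OF ideal_mid[OF assms(1)] assms(2)] .
  show "mid E \<subseteq> ideal_gen G"
  proof
    fix p :: "('v,'a) mpoly" assume p: "p \<in> mid E"
    have "(\<Sum>k\<in>Poly_Mapping.keys p. Poly_Mapping.single k (Poly_Mapping.lookup p k)) \<in> ideal_gen G"
    proof (rule ideal_sum[OF ideal_gen_ideal])
      fix k assume "k \<in> Poly_Mapping.keys p"
      then have "k \<in> E" using p by (auto simp: mid_def)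
      then show "Poly_Mapping.single k (Poly_Mapping.lookup p k) \<in> ideal_gen G"
        using single_mul ideal_multl[OF ideal_gen_ideal assms(3)] by metis
    qed
    then show "p \<in> ideal_gen G" using poly_decomp[of p] by simp
  qed
qed

fun Epow :: "('v \<Rightarrow>\<^sub>0 nat) set \<Rightarrow> nat \<Rightarrow> ('v \<Rightarrow>\<^sub>0 nat) set" where
  "Epow E1 0 = UNIV"
| "Epow E1 (Suc n) = {a + b | a b. a \<in> Epow E1 n \<and> b \<in> E1}"

lemma single_in_mid: "k \<in> E \<Longrightarrow> (Poly_Mapping.single k 1 :: ('v, 'a::field) mpoly) \<in> mid E"
  by (simp add: mid_def)

lemma pow_mid:
  fixes I :: "('v, 'a::field) mpoly set"
  assumes u: "upc E1" and I: "I = mid E1"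
  shows "ideal_pow I n = mid (Epow E1 n) \<and> upc (Epow E1 n)"
proof (induction n)
  case 0
  then show ?case by (simp add: mid_def upc_def)
next
  case (Suc n)
  have un: "upc (Epow E1 (Suc n))"
    unfolding upc_def
  proof (intro allI impI)
    fix x c assume "x \<in> Epow E1 (Suc n)"
    then obtain a b where "x = a + b" "a \<in> Epow E1 n" "b \<in> E1" by (simp only: Epow.simps) blast
    then have "x + c = a + (b + c)" by (simp add: add.assoc)
    moreover have "b + c \<in> E1" using u \<open>b \<in> E1\<close> unfolding upc_def by blast
    ultimately show "x + c \<in> Epow E1 (Suc n)" using \<open>a \<in> Epow E1 n\<close> by (simp only: Epow.simps) blast
  qed
  have "ideal_gen {a * b | a b. a \<in> ideal_pow I n \<and> b \<in> I} = mid (Epow E1 (Suc n))"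
  proof (rule gen_mid[OF un])
    show "{a * b |a b. a \<in> ideal_pow I n \<and> b \<in> I} \<subseteq> mid (Epow E1 (Suc n))"
    proof clarify
      fix a b :: "('v,'a) mpoly" assume "a \<in> ideal_pow I n" "b \<in> I"
      then have "Poly_Mapping.keys a \<subseteq> Epow E1 n" "Poly_Mapping.keys b \<subseteq> E1"
        using Suc I unfolding mid_def by blast+
      have "x \<in> Epow E1 (Suc n)" if x: "x \<in> Poly_Mapping.keys (a * b)" for x
      proof -
        obtain y z where "x = y + z" "y \<in> Poly_Mapping.keys a" "z \<in> Poly_Mapping.keys b"
          using keys_mult[of a b] x by blast
        then show ?thesis using \<open>Poly_Mapping.keys a \<subseteq> Epow E1 n\<close> \<open>Poly_Mapping.keys b \<subseteq> E1\<close> by (simp only: Epow.simps) blast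
      qed
      then show "a * b \<in> mid (Epow E1 (Suc n))" unfolding mid_def by blast
    qed
  next
    fix k assume "k \<in> Epow E1 (Suc n)"
    then obtain a b where ab: "k = a + b" "a \<in> Epow E1 n" "b \<in> E1" by (simp only: Epow.simps) blast
    have IH: "ideal_pow I n = mid (Epow E1 n)" using Suc by (rule conjunct1)
    have sa: "(Poly_Mapping.single a 1 :: ('v,'a) mpoly) \<in> ideal_pow I n"
      unfolding IH by (rule single_in_mid[OF ab(2)])
    have sb: "(Poly_Mapping.single b 1 :: ('v,'a) mpoly) \<in> I"
      unfolding I by (rule single_in_mid[OF ab(3)])
    have m1: "Poly_Mapping.single a 1 * Poly_Mapping.single b 1 \<in> {a * b |a b. a \<in> ideal_pow I n \<and> b \<in> I}"
      using sa sb by (intro CollectI exI conjI) (rule refl)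
    have m2: "(Poly_Mapping.single k 1 :: ('v,'a) mpoly) = Poly_Mapping.single a 1 * Poly_Mapping.single b 1"
      by (simp add: ab(1) mult_single)
    show "Poly_Mapping.single k 1 \<in> ideal_gen {a * b |a b. a \<in> ideal_pow I n \<and> b \<in> I}"
      unfolding m2 by (rule subsetD[OF ideal_gen_sub m1])
  qed
  then have "ideal_pow I (Suc n) = mid (Epow E1 (Suc n))" by (simp only: ideal_pow.simps)
  then show ?case using un by (rule conjI)
qed

lemma monomial_mid:
  fixes M :: "('v \<Rightarrow>\<^sub>0 nat) set"
  shows "(ideal_gen (monomial_poly ` M) :: ('v, 'a::field) mpoly set) = mid {m + d | m d. m \<in> M}"
    and "upc {m + d | m d. m \<in> M}"
proof -
  show u: "upc {m + d | m d. m \<in> M}" unfolding upc_def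
  proof (intro allI impI)
    fix a c assume "a \<in> {m + d | m d. m \<in> M}"
    then obtain m d where "a = m + d" "m \<in> M" by auto
    then have "a + c = m + (d + c)" by (simp add: add.assoc)
    then show "a + c \<in> {m + d | m d. m \<in> M}" using \<open>m \<in> M\<close> by blast
  qed
  show "(ideal_gen (monomial_poly ` M) :: ('v, 'a::field) mpoly set) = mid {m + d | m d. m \<in> M}"
  proof (rule gen_mid[OF u])
    show "(monomial_poly ` M :: ('v, 'a::field) mpoly set) \<subseteq> mid {m + d |m d. m \<in> M}"
    proof
      fix x assume "x \<in> (monomial_poly ` M :: ('v, 'a::field) mpoly set)"
      then obtain m where m: "m \<in> M" "x = monomial_poly m" by auto
      have "m = m + 0" by simp
      then have "m \<in> {m + d |m d. m \<in> M}" using m(1) by blast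
      then show "x \<in> mid {m + d |m d. m \<in> M}" using m(2) by (simp add: monomial_poly_def mid_def)
    qed
    fix k assume "k \<in> {m + d |m d. m \<in> M}"
    then obtain m d where md: "k = m + d" "m \<in> M" by auto
    have "(monomial_poly m :: ('v,'a) mpoly) \<in> monomial_poly ` M" using md(2) by (rule imageI)
    then have "(Poly_Mapping.single m 1 :: ('v,'a) mpoly) \<in> ideal_gen (monomial_poly ` M)"
      unfolding monomial_poly_def by (rule subsetD[OF ideal_gen_sub])
    then have "Poly_Mapping.single d 1 * (Poly_Mapping.single m 1 :: ('v,'a) mpoly) \<in> ideal_gen (monomial_poly ` M)"
      by (rule ideal_multl[OF ideal_gen_ideal])
    then show "(Poly_Mapping.single k 1 :: ('v,'a) mpoly) \<in> ideal_gen (monomial_poly ` M)"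
      using md(1) by (simp add: mult_single add.commute[of d m])
  qed
qed

lemma prime_PA:
  "prime_ideal (mid {b :: 'v::finite \<Rightarrow>\<^sub>0 nat. \<exists>i\<in>A. 0 < Poly_Mapping.lookup b i} :: ('v, 'a::field) mpoly set)"
proof -
  define F where "F = {b :: 'v \<Rightarrow>\<^sub>0 nat. \<exists>i\<in>A. 0 < Poly_Mapping.lookup b i}"
  define Z where "Z k \<longleftrightarrow> \<not> k \<in> F" for k
  have u: "upc F" unfolding upc_def F_def by (auto simp: lookup_add)
  have I: "is_ideal (mid F :: ('v, 'a) mpoly set)" by (rule ideal_mid[OF u])
  have n1: "(1 :: ('v, 'a) mpoly) \<notin> mid F" by (simp add: mid_def F_def)
  have ZZ: "Z (y + z)" if "Z y" "Z z" for y z using that by (auto simp: Z_def F_def lookup_add)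
  have pr: "a \<in> mid F \<or> b \<in> mid F" if ab: "a * b \<in> mid F" for a b :: "('v, 'a) mpoly"
  proof (rule ccontr)
    assume "\<not> (a \<in> mid F \<or> b \<in> mid F)"
    then have na: "a \<notin> mid F" and nb: "b \<notin> mid F" by auto
    define a' where "a' = restr Z a"
    define a'' where "a'' = restr (\<lambda>k. \<not> Z k) a"
    define b' where "b' = restr Z b"
    define b'' where "b'' = restr (\<lambda>k. \<not> Z k) b"
    have a'': "a'' \<in> mid F" by (auto simp: a''_def mid_def keys_restr Z_def)
    have b'': "b'' \<in> mid F" by (auto simp: b''_def mid_def keys_restr Z_def)
    have a'0: "a' \<noteq> 0"
    proof
      assume e: "a' = 0"
      obtain x where "x \<in> Poly_Mapping.keys a" "x \<notin> F" using na by (auto simp: mid_def)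
      then have "x \<in> Poly_Mapping.keys a'" by (simp add: a'_def keys_restr Z_def)
      with e show False by simp
    qed
    have b'0: "b' \<noteq> 0"
    proof
      assume e: "b' = 0"
      obtain x where "x \<in> Poly_Mapping.keys b" "x \<notin> F" using nb by (auto simp: mid_def)
      then have "x \<in> Poly_Mapping.keys b'" by (simp add: b'_def keys_restr Z_def)
      with e show False by simp
    qed
    have ea: "a = a' + a''" using restr_split[of a Z] by (simp add: a'_def a''_def)
    have eb: "b = b' + b''" using restr_split[of b Z] by (simp add: b'_def b''_def)
    have "a * b - a'' * b - a' * b'' = (a' + a'') * (b' + b'') - a'' * (b' + b'') - a' * b''"
      using ea eb by simp
    also have "\<dots> = a' * b'" by (simp add: algebra_simps)
    finally have "a' * b' = a * b - a'' * b - a' * b''" by simp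
    moreover have "a'' * b \<in> mid F" by (rule ideal_multr[OF I a''])
    moreover have "a' * b'' \<in> mid F" by (rule ideal_multl[OF I b''])
    ultimately have "a' * b' \<in> mid F" using ab I ideal_diff by metis
    moreover have "a' * b' \<noteq> 0" using mpoly_mult_ne0[OF a'0 b'0] .
    then obtain k where k: "k \<in> Poly_Mapping.keys (a' * b')" by (metis all_not_in_conv keys_eq_empty)
    then obtain y z where "k = y + z" "y \<in> Poly_Mapping.keys a'" "z \<in> Poly_Mapping.keys b'"
      using keys_mult[of a' b'] by blast
    then have "Z k" using ZZ by (auto simp: a'_def b'_def keys_restr)
    ultimately show False using k by (auto simp: mid_def Z_def)
  qed
  show ?thesis unfolding prime_ideal_def F_def[symmetric] using I n1 pr by auto
qed

lemma shift_lookup: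
  fixes z :: "('v, 'a::field) mpoly"
  shows "Poly_Mapping.lookup (z * Poly_Mapping.single c 1) (a + c) = Poly_Mapping.lookup z a"
proof -
  have "(\<Sum>k\<in>Poly_Mapping.keys z. Poly_Mapping.single k (Poly_Mapping.lookup z k)) * Poly_Mapping.single c 1
     = (\<Sum>k\<in>Poly_Mapping.keys z. Poly_Mapping.single (k + c) (Poly_Mapping.lookup z k))"
    by (simp add: sum_distrib_right mult_single)
  then have eq: "z * Poly_Mapping.single c 1 = (\<Sum>k\<in>Poly_Mapping.keys z. Poly_Mapping.single (k + c) (Poly_Mapping.lookup z k))"
    using poly_decomp[of z] by simp
  show ?thesis unfolding eq
    by (simp add: lookup_sum lookup_single when_def in_keys_iff)
qed

lemma nat_pm_split: "0 < Poly_Mapping.lookup (b :: 'v \<Rightarrow>\<^sub>0 nat) i \<Longrightarrow> b = Poly_Mapping.single i 1 + (b - Poly_Mapping.single i 1)"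
  by (rule poly_mapping_eqI) (auto simp: lookup_add lookup_minus lookup_single when_def)


lemma GL:
  fixes z :: "('v::finite, 'a::field) mpoly"
  assumes u: "upc E" and z: "z \<notin> mid E"
  shows "\<exists>c. prime_ideal (colon (mid E) (z * Poly_Mapping.single c 1))"
proof -
  define S where "S c = {a \<in> Poly_Mapping.keys z. a + c \<notin> E}" for c
  have Sfin: "finite (S c)" for c unfolding S_def by simp
  have S0: "S 0 \<noteq> {}" using z unfolding S_def mid_def by auto
  obtain c where c1: "S c \<noteq> {}" and c2: "\<And>c'. S c' \<noteq> {} \<Longrightarrow> card (S c) \<le> card (S c')"
    using ex_has_least_nat[of "\<lambda>c. S c \<noteq> {}" 0 "\<lambda>c. card (S c)"] S0 by blast
  have Smono: "S (c + c') \<subseteq> S c" for c'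
  proof
    fix a assume a: "a \<in> S (c + c')"
    have "a + c \<notin> E"
    proof
      assume "a + c \<in> E"
      then have "a + c + c' \<in> E" using u unfolding upc_def by blast
      then show False using a by (simp add: S_def add.assoc)
    qed
    then show "a \<in> S c" using a by (simp add: S_def)
  qed
  have Seq: "S (c + c') = S c" if ne: "S (c + c') \<noteq> {}" for c'
  proof (rule card_subset_eq[OF Sfin Smono])
    show "card (S (c + c')) = card (S c)"
      using c2[OF ne] card_mono[OF Sfin Smono[of c']] by simp
  qed
  obtain a0 where a0: "a0 \<in> S c" using c1 by auto
  define A where "A d = {i. d + Poly_Mapping.single i 1 \<in> E}" for d
  have Acard: "card (A d) \<le> card (UNIV :: 'v set)" for d by (rule card_mono) auto
  have st: "a0 + c + 0 \<notin> E" using a0 unfolding S_def by simp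
  obtain c'' where c''1: "a0 + c + c'' \<notin> E" and
    c''2: "\<And>c'. a0 + c + c' \<notin> E \<Longrightarrow> card (UNIV :: 'v set) - card (A (a0 + c + c'')) \<le> card (UNIV :: 'v set) - card (A (a0 + c + c'))"
    using ex_has_least_nat[of "\<lambda>c'. a0 + c + c' \<notin> E" 0 "\<lambda>c'. card (UNIV :: 'v set) - card (A (a0 + c + c'))"] st by blast
  have c''3: "card (A (a0 + c + c')) \<le> card (A (a0 + c + c''))" if "a0 + c + c' \<notin> E" for c'
    using c''2[OF that] Acard[of "a0+c+c'"] Acard[of "a0+c+c''"] by linarith
  define ct where "ct = c + c''"
  define d where "d = a0 + ct"
  have dE: "d \<notin> E" using c''1 by (simp add: d_def ct_def add.assoc)
  have a0ct: "a0 \<in> S ct" using a0 dE by (simp add: S_def d_def)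
  have Sct: "S ct \<subseteq> S c" using Smono[of c''] ct_def by simp
  have gen: "a2 + ct + b \<notin> E" if "a1 \<in> S ct" "a2 \<in> S ct" "a1 + ct + b \<notin> E" for a1 a2 b
  proof -
    have "a1 \<in> S (c + (c'' + b))" using that(1,3) by (simp add: S_def ct_def add.assoc)
    then have "S (c + (c'' + b)) = S c" using Seq by blast
    moreover have "a2 \<in> S c" using that(2) Sct by blast
    ultimately have "a2 \<in> S (c + (c'' + b))" by simp
    then show ?thesis by (simp add: S_def ct_def add.assoc)
  qed
  have key: "a + ct + b \<in> E \<longleftrightarrow> d + b \<in> E" if a: "a \<in> S ct" for a b
    using gen[OF a a0ct, of b] gen[OF a0ct a, of b] by (auto simp: d_def)
  define w where "w = z * Poly_Mapping.single ct 1"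
  define w' where "w' = restr (\<lambda>k. k \<notin> E) w"
  have w'0: "w' \<noteq> 0"
  proof
    assume "w' = 0"
    then have "Poly_Mapping.lookup w' (a0 + ct) = 0" by simp
    moreover have "Poly_Mapping.lookup w' (a0 + ct) = Poly_Mapping.lookup z a0"
      using dE by (simp add: w'_def w_def lookup_restr shift_lookup d_def)
    moreover have "Poly_Mapping.lookup z a0 \<noteq> 0" using a0 by (simp add: S_def in_keys_iff)
    ultimately show False by simp
  qed
  have kw': "\<exists>a\<in>S ct. k = a + ct" if k: "k \<in> Poly_Mapping.keys w'" for k
  proof -
    have kw: "k \<in> Poly_Mapping.keys w" and kE: "k \<notin> E" using k by (auto simp: w'_def keys_restr)
    obtain a b where ab: "a \<in> Poly_Mapping.keys z" "b \<in> Poly_Mapping.keys (Poly_Mapping.single ct (1::'a))" "k = a + b"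
      using keys_mult[of z "Poly_Mapping.single ct 1"] kw unfolding w_def by blast
    then have "b = ct" by simp
    then show ?thesis using ab kE by (auto simp: S_def)
  qed
  have I: "is_ideal (mid E :: ('v,'a) mpoly set)" by (rule ideal_mid[OF u])
  have wdiff: "w - w' \<in> mid E"
  proof -
    have "w = w' + restr (\<lambda>k. \<not> k \<notin> E) w" using restr_split[of w "\<lambda>k. k \<notin> E"] by (simp add: w'_def)
    then have "w - w' = restr (\<lambda>k. \<not> k \<notin> E) w" by (metis add_diff_cancel_left')
    then show ?thesis by (auto simp: mid_def keys_restr)
  qed
  have ceq: "colon (mid E) w = colon (mid E) w'"
  proof -
    have "p * w \<in> mid E \<longleftrightarrow> p * w' \<in> mid E" for p
    proof -
      have pd: "p * (w - w') \<in> mid E" by (rule ideal_multl[OF I wdiff])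
      have e1: "p * w = p * w' + p * (w - w')" by (simp add: algebra_simps)
      have e2: "p * w' = p * w - p * (w - w')" by (simp add: algebra_simps)
      show ?thesis
      proof
        assume "p * w \<in> mid E" then show "p * w' \<in> mid E" unfolding e2 using ideal_diff[OF I _ pd] by blast
      next
        assume "p * w' \<in> mid E" then show "p * w \<in> mid E" unfolding e1 using ideal_add[OF I _ pd] by blast
      qed
    qed
    then show ?thesis by (auto simp: colon_def)
  qed
  define F where "F = {b. d + b \<in> E}"
  have sup: "p * w' \<in> mid E" if pF: "p \<in> mid F" for p
  proof -
    have "k \<in> E" if k: "k \<in> Poly_Mapping.keys (p * w')" for k
    proof -
      obtain b k' where bk: "b \<in> Poly_Mapping.keys p" "k' \<in> Poly_Mapping.keys w'" "k = b + k'"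
        using keys_mult[of p w'] k by blast
      obtain a where a: "a \<in> S ct" "k' = a + ct" using kw'[OF bk(2)] by blast
      have "d + b \<in> E" using bk(1) pF by (auto simp: F_def mid_def)
      then have "a + ct + b \<in> E" using key[OF a(1)] by simp
      then show "k \<in> E" using bk(3) a(2) by (simp add: add.commute)
    qed
    then show ?thesis by (auto simp: mid_def)
  qed
  have sub: "p \<in> mid F" if pw: "p * w' \<in> mid E" for p
  proof (rule ccontr)
    assume np: "p \<notin> mid F"
    define p1 where "p1 = restr (\<lambda>b. b \<notin> F) p"
    define p2 where "p2 = restr (\<lambda>b. \<not> b \<notin> F) p"
    have ep: "p = p1 + p2" using restr_split[of p "\<lambda>b. b \<notin> F"] by (simp add: p1_def p2_def)
    have p2F: "p2 \<in> mid F" by (auto simp: p2_def mid_def keys_restr)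
    have p1w: "p1 * w' \<in> mid E"
    proof -
      have "p1 * w' = p * w' - p2 * w'" using ep by (simp add: algebra_simps)
      then show ?thesis using ideal_diff[OF I pw sup[OF p2F]] by simp
    qed
    have p10: "p1 \<noteq> 0"
    proof
      assume e: "p1 = 0"
      obtain x where "x \<in> Poly_Mapping.keys p" "x \<notin> F" using np by (auto simp: mid_def)
      then have "x \<in> Poly_Mapping.keys p1" by (simp add: p1_def keys_restr)
      with e show False by simp
    qed
    have "p1 * w' \<noteq> 0" using mpoly_mult_ne0[OF p10 w'0] .
    then obtain k where k: "k \<in> Poly_Mapping.keys (p1 * w')" by (metis all_not_in_conv keys_eq_empty)
    obtain b k' where bk: "b \<in> Poly_Mapping.keys p1" "k' \<in> Poly_Mapping.keys w'" "k = b + k'"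
      using keys_mult[of p1 w'] k by blast
    obtain a where a: "a \<in> S ct" "k' = a + ct" using kw'[OF bk(2)] by blast
    have "b \<notin> F" using bk(1) by (simp add: p1_def keys_restr)
    then have "a + ct + b \<notin> E" using key[OF a(1)] by (simp add: F_def)
    moreover have "k \<in> E" using p1w k by (auto simp: mid_def)
    ultimately show False using bk(3) a(2) by (simp add: add.commute)
  qed
  have cF: "colon (mid E) w = mid F" using ceq sup sub by (auto simp: colon_def)
  define Fp where "Fp = {b :: 'v \<Rightarrow>\<^sub>0 nat. \<exists>i\<in>A d. 0 < Poly_Mapping.lookup b i}"
  have FFp: "F = Fp"
  proof (rule set_eqI)
    fix b show "b \<in> F \<longleftrightarrow> b \<in> Fp"
    proof
      assume "b \<in> Fp"
      then obtain i where i: "i \<in> A d" "0 < Poly_Mapping.lookup b i" by (auto simp: Fp_def)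
      have eb: "b = Poly_Mapping.single i 1 + (b - Poly_Mapping.single i 1)" by (rule nat_pm_split[OF i(2)])
      have "d + Poly_Mapping.single i 1 \<in> E" using i(1) by (simp add: A_def)
      then have "d + Poly_Mapping.single i 1 + (b - Poly_Mapping.single i 1) \<in> E" using u unfolding upc_def by blast
      moreover have "d + b = d + Poly_Mapping.single i 1 + (b - Poly_Mapping.single i 1)"
        by (subst eb) (simp add: add.assoc)
      ultimately show "b \<in> F" by (simp add: F_def)
    next
      assume bF: "b \<in> F"
      show "b \<in> Fp"
      proof (rule ccontr)
        assume "b \<notin> Fp"
        then have P: "b \<in> F \<and> (\<forall>i\<in>A d. Poly_Mapping.lookup b i = 0)" using bF by (auto simp: Fp_def)
        obtain b0 where b01: "b0 \<in> F \<and> (\<forall>i\<in>A d. Poly_Mapping.lookup b0 i = 0)"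
          and b02: "\<And>y. y \<in> F \<and> (\<forall>i\<in>A d. Poly_Mapping.lookup y i = 0) \<Longrightarrow> mon_deg b0 \<le> mon_deg y"
          using ex_has_least_nat[of "\<lambda>y. y \<in> F \<and> (\<forall>i\<in>A d. Poly_Mapping.lookup y i = 0)" b mon_deg] P by blast
        have "b0 \<noteq> 0" using b01 dE by (auto simp: F_def)
        then obtain j where "j \<in> Poly_Mapping.keys b0" by (metis all_not_in_conv keys_eq_empty)
        then have j: "0 < Poly_Mapping.lookup b0 j" by (simp add: in_keys_iff)
        have jA: "j \<notin> A d" using b01 j by auto
        define b' where "b' = b0 - Poly_Mapping.single j 1"
        have eb: "b0 = Poly_Mapping.single j 1 + b'" using nat_pm_split[OF j] by (simp add: b'_def)
        have degb': "mon_deg b' < mon_deg b0"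
          using eb mon_deg_add[of "Poly_Mapping.single j 1" b'] mon_deg_single[of j] by simp
        have zb': "\<forall>i\<in>A d. Poly_Mapping.lookup b' i = 0" using b01 by (simp add: b'_def lookup_minus)
        have "b' \<notin> F" using b02[of b'] zb' degb' by auto
        then have dbE: "d + b' \<notin> E" by (simp add: F_def)
        have "a0 + c + (c'' + b') \<notin> E" using dbE by (simp add: d_def ct_def add.assoc)
        then have cardle: "card (A (a0 + c + (c'' + b'))) \<le> card (A (a0 + c + c''))" by (rule c''3)
        have AA1: "a0 + c + (c'' + b') = d + b'" by (simp add: d_def ct_def add.assoc)
        have AA2: "a0 + c + c'' = d" by (simp add: d_def ct_def add.assoc)
        have sub1: "A d \<subseteq> A (d + b')"
        proof
          fix i assume "i \<in> A d"
          then have "d + Poly_Mapping.single i 1 + b' \<in> E" using u unfolding A_def upc_def by blast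
          then show "i \<in> A (d + b')" unfolding A_def by (simp add: ac_simps)
        qed
        have "d + b0 \<in> E" using b01 by (simp add: F_def)
        then have "j \<in> A (d + b')" unfolding A_def using eb by (simp add: ac_simps)
        then have "A d \<subset> A (d + b')" using sub1 jA by auto
        then have "card (A d) < card (A (d + b'))" by (rule psubset_card_mono[rotated]) simp
        then show False using cardle AA1 AA2 by simp
      qed
    qed
  qed
  have "prime_ideal (colon (mid E) w)"
    unfolding cF FFp Fp_def by (rule prime_PA)
  then show ?thesis unfolding w_def by blast
qed


lemma single1_ne0: "(Poly_Mapping.single m 1 :: ('v, 'a::field) mpoly) \<noteq> 0"
proof
  assume "(Poly_Mapping.single m 1 :: ('v, 'a::field) mpoly) = 0"
  then have "Poly_Mapping.lookup (Poly_Mapping.single m 1 :: ('v, 'a::field) mpoly) m = 0" by simp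
  then show False by simp
qed

lemma homog_mult:
  fixes p q :: "('v::finite, 'a::field) mpoly"
  assumes "homog a p" "homog b q" shows "homog (a + b) (p * q)"
  unfolding homog_def
proof
  fix m assume "m \<in> Poly_Mapping.keys (p * q)"
  then obtain x y where "x \<in> Poly_Mapping.keys p" "y \<in> Poly_Mapping.keys q" "m = x + y"
    using keys_mult[of p q] by blast
  then show "mon_deg m = a + b" using assms unfolding homog_def by (simp add: mon_deg_add)
qed

lemma homog_pow:
  fixes p :: "('v::finite, 'a::field) mpoly"
  assumes "homog a p" shows "homog (n * a) (p ^ n)"
proof (induction n)
  case 0
  then show ?case by (simp add: homog_def mon_deg_0)
next
  case (Suc n)
  then show ?case using homog_mult[OF assms Suc] by (simp add: add.commute)
qed

lemma pow_ne0:
  fixes p :: "('v::finite, 'a::field) mpoly"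
  assumes "p \<noteq> 0" shows "p ^ n \<noteq> 0"
  by (induction n) (simp_all add: mpoly_mult_ne0[OF assms])

lemma var_in_prime:
  fixes P :: "('v::finite, 'a::field) mpoly set"
  assumes P: "prime_ideal P"
  shows "Poly_Mapping.single c 1 \<in> P \<Longrightarrow> \<exists>i. Poly_Mapping.single (Poly_Mapping.single i 1) 1 \<in> P"
proof (induction "mon_deg c" arbitrary: c rule: less_induct)
  case less
  show ?case
  proof (cases "c = 0")
    case True
    then have "(1::('v,'a) mpoly) \<in> P" using less.prems by simp
    then have "r \<in> P" for r using P ideal_multl[of P 1 r] unfolding prime_ideal_def by simp
    then show ?thesis using P unfolding prime_ideal_def by auto
  next
    case False
    then obtain j where "j \<in> Poly_Mapping.keys c" by (metis all_not_in_conv keys_eq_empty)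
    then have j: "0 < Poly_Mapping.lookup c j" by (simp add: in_keys_iff)
    define c' where "c' = c - Poly_Mapping.single j 1"
    have ec: "c = Poly_Mapping.single j 1 + c'" using nat_pm_split[OF j] by (simp add: c'_def)
    have "(Poly_Mapping.single c 1 :: ('v,'a) mpoly) = Poly_Mapping.single (Poly_Mapping.single j 1) 1 * Poly_Mapping.single c' 1"
      by (subst ec) (simp add: mult_single)
    then have "Poly_Mapping.single (Poly_Mapping.single j 1) 1 \<in> P \<or> (Poly_Mapping.single c' 1 :: ('v,'a) mpoly) \<in> P"
      using less.prems P unfolding prime_ideal_def by metis
    moreover have "mon_deg c' < mon_deg c" using ec mon_deg_add[of "Poly_Mapping.single j 1" c'] mon_deg_single[of j] by simp
    ultimately show ?thesis using less.hyps by blast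
  qed
qed

lemma Epow_deg:
  assumes "\<And>b. b \<in> E1 \<Longrightarrow> al \<le> mon_deg (b :: 'v::finite \<Rightarrow>\<^sub>0 nat)"
  shows "a \<in> Epow E1 n \<Longrightarrow> n * al \<le> mon_deg a"
proof (induction n arbitrary: a)
  case 0 then show ?case by simp
next
  case (Suc n)
  then obtain x y where "a = x + y" "x \<in> Epow E1 n" "y \<in> E1" by auto
  then show ?case using Suc.IH[of x] assms[of y] by (simp add: mon_deg_add)
qed

lemma Epow_ne: "E1 \<noteq> {} \<Longrightarrow> Epow E1 n \<noteq> {}"
  by (induction n) auto

theorem corollary4p9:
  fixes I :: "('v::finite, 'a::field) mpoly set" and f :: "('v, 'a) mpoly"
  assumes "monomial_ideal I" and "I \<noteq> {0}" and "I \<noteq> UNIV"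
    and "f \<in> I" and "f \<noteq> 0" and "homog (alpha I) f"
    and "\<exists>N. \<forall>n\<ge>N. v_number (colon (ideal_pow I (n + 1)) (f ^ n)) = alpha I - 1"
  shows "\<exists>N. \<forall>n\<ge>N. v_number (ideal_pow I (n + 1)) = (n + 1) * alpha I - 1"
proof -
  obtain M where IM: "I = ideal_gen (monomial_poly ` M)" using assms(1) unfolding monomial_ideal_def by blast
  define E1 where "E1 = {m + d | m d. m \<in> M}"
  have IE: "I = mid E1" and uE1: "upc E1" using monomial_mid[of M] IM E1_def by auto
  define al where "al = alpha I"
  have alm: "al \<le> mon_deg m" if m: "m \<in> M" for m
  proof -
    have "monomial_poly m \<in> I" using IM m ideal_gen_sub by blast
    moreover have "(monomial_poly m :: ('v,'a) mpoly) \<noteq> 0" unfolding monomial_poly_def by (rule single1_ne0)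
    moreover have "homog (mon_deg m) (monomial_poly m :: ('v,'a) mpoly)" by (simp add: monomial_poly_def homog_def)
    ultimately show ?thesis unfolding al_def alpha_def by (blast intro: Least_le)
  qed
  have alE: "al \<le> mon_deg b" if "b \<in> E1" for b
    using that alm by (auto simp: E1_def mon_deg_add) (meson le_add1 order_trans)
  have Mne: "M \<noteq> {}"
  proof
    assume "M = {}"
    then have "I = mid {}" using IE E1_def by simp
    then have "I = {0}" by (auto simp: mid_def)
    then show False using assms(2) by simp
  qed
  then have E1ne: "E1 \<noteq> {}" unfolding E1_def by auto
  have al1: "1 \<le> al"
  proof (rule ccontr)
    assume "\<not> 1 \<le> al"
    then have "al = 0" by simp
    obtain k where k: "k \<in> Poly_Mapping.keys f" using assms(5) by (metis all_not_in_conv keys_eq_empty)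
    have "mon_deg k = 0" using assms(6) k \<open>al = 0\<close> unfolding homog_def al_def by simp
    then have "k = 0" by (rule mon_deg_eq_0)
    moreover have "k \<in> E1" using k assms(4) IE by (auto simp: mid_def)
    ultimately have "0 \<in> E1" by simp
    then have "b \<in> E1" for b using uE1 unfolding upc_def by (metis add_0_left)
    then have "I = UNIV" using IE by (auto simp: mid_def)
    then show False using assms(3) by simp
  qed
  define J where "J n = ideal_pow I (n + 1)" for n
  have JE: "J n = mid (Epow E1 (n + 1))" and uJ: "upc (Epow E1 (n + 1))" for n
    using pow_mid[OF uE1 IE, of "n + 1"] by (auto simp: J_def)
  have degJ: "(n + 1) * al \<le> mon_deg a" if "a \<in> Epow E1 (n + 1)" for n a
    using Epow_deg[of E1 al, OF alE that] .
  have IJ: "is_ideal (J n)" for n unfolding JE by (rule ideal_mid[OF uJ])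
  have LB: "(n + 1) * al \<le> k + 1" if W: "homog k g" "P \<in> Ass (J n)" "colon (J n) g = P" for n k g P
  proof -
    have Pp: "prime_ideal P" using W(2) by (simp add: Ass_def)
    have "g \<noteq> 0"
    proof
      assume "g = 0"
      then have "colon (J n) g = UNIV" using ideal_0[OF IJ] by (auto simp: colon_def)
      then show False using Pp W(3) unfolding prime_ideal_def by simp
    qed
    obtain c where c: "c \<in> Epow E1 (n + 1)" using Epow_ne[OF E1ne] by blast
    have "(Poly_Mapping.single c 1 :: ('v,'a) mpoly) \<in> J n" unfolding JE by (rule single_in_mid[OF c])
    then have "(Poly_Mapping.single c 1 :: ('v,'a) mpoly) \<in> P" using W(3) ideal_multr[OF IJ] by (auto simp: colon_def)
    then obtain i where xi: "Poly_Mapping.single (Poly_Mapping.single i 1) 1 \<in> P" using var_in_prime[OF Pp] by blast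
    define x :: "('v,'a) mpoly" where "x = Poly_Mapping.single (Poly_Mapping.single i 1) 1"
    have xg: "x * g \<in> J n" using xi W(3) by (auto simp: colon_def x_def)
    have "x \<noteq> 0" unfolding x_def by (rule single1_ne0)
    then have "x * g \<noteq> 0" using mpoly_mult_ne0 \<open>g \<noteq> 0\<close> by blast
    then obtain \<kappa> where \<kappa>: "\<kappa> \<in> Poly_Mapping.keys (x * g)" by (metis all_not_in_conv keys_eq_empty)
    have "homog 1 x" unfolding x_def homog_def using mon_deg_single[of i] by simp
    then have "homog (1 + k) (x * g)" using homog_mult W(1) by blast
    then have "mon_deg \<kappa> = 1 + k" using \<kappa> by (simp add: homog_def)
    moreover have "\<kappa> \<in> Epow E1 (n + 1)" using xg \<kappa> JE by (auto simp: mid_def)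
    ultimately show ?thesis using degJ[OF \<open>\<kappa> \<in> Epow E1 (n + 1)\<close>] by simp
  qed
  have EX: "\<exists>k g P. homog k g \<and> P \<in> Ass (colon (J n) (f ^ n)) \<and> colon (colon (J n) (f ^ n)) g = P" for n
  proof -
    have fn0: "f ^ n \<noteq> 0" by (rule pow_ne0[OF assms(5)])
    have hf: "homog (n * al) (f ^ n)" using homog_pow assms(6) al_def by blast
    have "f ^ n \<notin> J n"
    proof
      assume fJ: "f ^ n \<in> J n"
      obtain \<kappa> where \<kappa>: "\<kappa> \<in> Poly_Mapping.keys (f ^ n)" using fn0 by (metis all_not_in_conv keys_eq_empty)
      have "mon_deg \<kappa> = n * al" using hf \<kappa> by (simp add: homog_def)
      moreover have "\<kappa> \<in> Epow E1 (n + 1)" using fJ \<kappa> JE by (auto simp: mid_def)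
      ultimately have "(n + 1) * al \<le> n * al" using degJ[OF \<open>\<kappa> \<in> Epow E1 (n + 1)\<close>] by simp
      then show False using al1 by simp
    qed
    then have "f ^ n \<notin> mid (Epow E1 (n + 1))" using JE by simp
    from GL[OF uJ[of n] this] obtain c where pc: "prime_ideal (colon (J n) (f ^ n * Poly_Mapping.single c 1))"
      unfolding JE[symmetric] by blast
    have ceq: "colon (colon (J n) (f ^ n)) (Poly_Mapping.single c 1) = colon (J n) (f ^ n * Poly_Mapping.single c 1)"
      by (auto simp: colon_def ac_simps)
    have "homog (mon_deg c) (Poly_Mapping.single c 1 :: ('v,'a) mpoly)" by (simp add: homog_def)
    moreover have "colon (J n) (f ^ n * Poly_Mapping.single c 1) \<in> Ass (colon (J n) (f ^ n))"
      using pc ceq unfolding Ass_def by auto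
    ultimately show ?thesis using ceq by blast
  qed
  obtain N where N: "\<And>n. n \<ge> N \<Longrightarrow> v_number (colon (J n) (f ^ n)) = al - 1"
    using assms(7) unfolding J_def al_def by blast
  have "v_number (J n) = (n + 1) * al - 1" if n: "n \<ge> N" for n
  proof -
    let ?W = "\<lambda>k. \<exists>g P. homog k g \<and> P \<in> Ass (colon (J n) (f ^ n)) \<and> colon (colon (J n) (f ^ n)) g = P"
    have "?W (LEAST k. ?W k)" by (rule LeastI_ex) (rule EX)
    then have "?W (al - 1)" using N[OF n] unfolding v_number_def by simp
    then obtain g P where g: "homog (al - 1) g" "P \<in> Ass (colon (J n) (f ^ n))" "colon (colon (J n) (f ^ n)) g = P"
      by blast
    have ceq: "colon (J n) (f ^ n * g) = P" using g(3) by (auto simp: colon_def ac_simps)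
    have PA: "P \<in> Ass (J n)" using g(2) ceq unfolding Ass_def by blast
    have "homog (n * al + (al - 1)) (f ^ n * g)"
      using homog_mult[OF homog_pow[OF assms(6)] g(1)] al_def by simp
    moreover have "n * al + (al - 1) = (n + 1) * al - 1" using al1 by (simp add: algebra_simps)
    ultimately have hw: "homog ((n + 1) * al - 1) (f ^ n * g)" by simp
    show ?thesis unfolding v_number_def
    proof (rule Least_equality)
      show "\<exists>g P. homog ((n + 1) * al - 1) g \<and> P \<in> Ass (J n) \<and> colon (J n) g = P"
        using hw PA ceq by blast
    next
      fix y assume "\<exists>g P. homog y g \<and> P \<in> Ass (J n) \<and> colon (J n) g = P"
      then obtain g' P' where "homog y g'" "P' \<in> Ass (J n)" "colon (J n) g' = P'" by blast
      then have "(n + 1) * al \<le> y + 1" by (rule LB)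
      then show "(n + 1) * al - 1 \<le> y" by simp
    qed
  qed
  then show ?thesis unfolding J_def al_def by blast
qed

end
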